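(* Let $n\ge p\ge1$, $0<\varepsilon<1$, $\lambda>0$, $\tilde a>0$, and let $\mathrm{St}(p,n)^\varepsilon=\{X\in\mathbb{R}^{n\times p}:\|X^\top X-I_p\|\le\varepsilon\}$. For each $k\ge0$ let $\mathcal{A}_k$ be a map sending $(X_0,\dots,X_k)\in(\mathbb{R}^{n\times p})^{k+1}$ to a skew-symmetric matrix in $\mathbb{R}^{n\times n}$, such that $\|\mathcal{A}_k(X_0,\dots,X_k)X_k\|\le\tilde a$ whenever $X_0,\dots,X_k\in\mathrm{St}(p,n)^\varepsilon$. Let $X_0\in\mathrm{St}(p,n)^\varepsilon$ and define recursively $A_k=\mathcal{A}_k(X_0,\dots,X_k)$ and $X_{k+1}=X_k-\eta_k\big(A_kX_k+\lambda X_k(X_k^\top X_k-I_p)\big)$ with step sizes $\eta_k>0$. If $\eta_k\le\eta^*(\tilde a,\varepsilon,\lambda)$ for all $k$, then $X_k\in\mathrm{St}(p,n)^\varepsilon$ for all $k\ge0$.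
   Context: $\|\cdot\|$ is the Frobenius norm. $\eta^*(\tilde a,\varepsilon,\lambda)=\min\{Q(\lambda,\varepsilon,\tilde a),\frac1{2\lambda}\}$ with $Q(\lambda,\varepsilon,\tilde a)=\inf_{a\in(0,\tilde a],\,d\in(0,\varepsilon]}\frac{\lambda(1-\varepsilon)d+a\sqrt{(\varepsilon-d)/2}}{a^2+\lambda^2(1+\varepsilon)d^2}$. *)

theory Defs
  imports "HOL-Analysis.Analysis"
begin

definition fro_norm :: "real^'c^'r \<Rightarrow> real" where
  "fro_norm M = sqrt (\<Sum>i\<in>UNIV. \<Sum>j\<in>UNIV. (M $ i $ j)^2)"

definition St_eps :: "real \<Rightarrow> (real^'p^'n) set" where
  "St_eps \<epsilon> = {X. fro_norm (transpose X ** X - mat 1) \<le> \<epsilon>}"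

definition Q_fun :: "real \<Rightarrow> real \<Rightarrow> real \<Rightarrow> real" where
  "Q_fun lam \<epsilon> atil = Inf ((\<lambda>(a, d). (lam * (1 - \<epsilon>) * d + a * sqrt ((\<epsilon> - d) / 2))
        / (a^2 + lam^2 * (1 + \<epsilon>) * d^2)) ` ({0<..atil} \<times> {0<..\<epsilon>}))"

definition eta_star :: "real \<Rightarrow> real \<Rightarrow> real \<Rightarrow> real" where
  "eta_star atil \<epsilon> lam = min (Q_fun lam \<epsilon> atil) (1 / (2 * lam))"

end

theory Submission
  imports Defs
begin


lemma norm_sq_mat: "(norm (M::real^'c^'r))^2 = (\<Sum>i\<in>UNIV. \<Sum>j\<in>UNIV. (M $ i $ j)^2)"
  unfolding power2_norm_eq_inner by (simp add: inner_vec_def power2_eq_square)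

lemma fro_norm_eq: "fro_norm (M::real^'c^'r) = norm M"
  unfolding fro_norm_def norm_sq_mat[symmetric] by simp

lemma norm_sq_vec: "(norm (v::real^'c))^2 = (\<Sum>i\<in>UNIV. (v $ i)^2)"
  unfolding power2_norm_eq_inner by (simp add: inner_vec_def power2_eq_square)

lemma mm_entry: "((A::real^'m^'n) ** B) $ i $ j = inner (row i A) (column j B)"
  by (simp add: matrix_matrix_mult_def inner_vec_def row_def column_def)

lemma norm_mm_le: "norm ((A::real^'m^'n) ** (B::real^'p^'m)) \<le> norm A * norm B"
proof -
  have e: "((A ** B) $ i $ j)^2 \<le> (norm (row i A))^2 * (norm (column j B))^2" for i j
  proof -
    have "\<bar>(A ** B) $ i $ j\<bar> \<le> norm (row i A) * norm (column j B)"
      unfolding mm_entry by (rule Cauchy_Schwarz_ineq2)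
    then have "\<bar>(A ** B) $ i $ j\<bar>^2 \<le> (norm (row i A) * norm (column j B))^2"
      by (intro power_mono) auto
    then show ?thesis by (simp add: power_mult_distrib)
  qed
  have "(norm (A ** B))^2 \<le> (\<Sum>i\<in>UNIV. \<Sum>j\<in>UNIV. (norm (row i A))^2 * (norm (column j B))^2)"
    unfolding norm_sq_mat by (intro sum_mono e)
  also have "\<dots> = (\<Sum>i\<in>UNIV. (norm (row i A))^2) * (\<Sum>j\<in>UNIV. (norm (column j B))^2)"
    by (simp add: sum_product)
  also have "(\<Sum>i\<in>UNIV. (norm (row i A))^2) = (norm A)^2"
    unfolding norm_sq_mat norm_sq_vec by (simp add: row_def)
  also have "(\<Sum>j\<in>UNIV. (norm (column j B))^2) = (norm B)^2"
    unfolding norm_sq_mat norm_sq_vec by (simp add: column_def, rule sum.swap)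
  finally have "(norm (A ** B))^2 \<le> (norm A * norm B)^2" by (simp add: power_mult_distrib)
  then show ?thesis by (rule power2_le_imp_le) simp
qed

lemma norm_transpose: "norm (transpose (A::real^'m^'n)) = norm A"
proof -
  have "(norm (transpose A))^2 = (norm A)^2"
    unfolding norm_sq_mat by (simp add: transpose_def, rule sum.swap)
  then show ?thesis by (simp add: power2_eq_iff_nonneg)
qed

lemma norm_mv_le: "norm ((A::real^'m^'n) *v v) \<le> norm A * norm v"
proof -
  have e: "((A *v v) $ i)^2 \<le> (norm (row i A))^2 * (norm v)^2" for i
  proof -
    have "\<bar>(A *v v) $ i\<bar> \<le> norm (row i A) * norm v"
      unfolding matrix_vector_mult_def using Cauchy_Schwarz_ineq2[of "row i A" v]
      by (simp add: inner_vec_def row_def)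
    then have "\<bar>(A *v v) $ i\<bar>^2 \<le> (norm (row i A) * norm v)^2"
      by (intro power_mono) auto
    then show ?thesis by (simp add: power_mult_distrib)
  qed
  have "(norm (A *v v))^2 = (\<Sum>i\<in>UNIV. ((A *v v) $ i)^2)" by (rule norm_sq_vec)
  also have "\<dots> \<le> (\<Sum>i\<in>UNIV. (norm (row i A))^2 * (norm v)^2)"
    by (intro sum_mono e)
  also have "\<dots> = (\<Sum>i\<in>UNIV. (norm (row i A))^2) * (norm v)^2"
    by (simp add: sum_distrib_right)
  also have "(\<Sum>i\<in>UNIV. (norm (row i A))^2) = (norm A)^2"
    unfolding norm_sq_mat norm_sq_vec by (simp add: row_def)
  finally have "(norm (A *v v))^2 \<le> (norm A * norm v)^2" by (simp add: power_mult_distrib)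
  then show ?thesis by (rule power2_le_imp_le) simp
qed

lemma norm_sq_rows: "(norm (M::real^'c^'r))^2 = (\<Sum>i\<in>UNIV. (norm (M $ i))^2)"
  by (simp add: norm_sq_mat norm_sq_vec)

lemma inner_mv_transpose: "inner ((X::real^'m^'n) *v u) w = inner u (transpose X *v w)"
  by (metis dot_lmul_matrix vector_transpose_matrix)

lemma tr_add: "transpose ((A::real^'m^'n) + B) = transpose A + transpose B"
  by (simp add: transpose_def vec_eq_iff)
lemma tr_diff: "transpose ((A::real^'m^'n) - B) = transpose A - transpose B"
  by (simp add: transpose_def vec_eq_iff)
lemma tr_neg: "transpose (- (A::real^'m^'n)) = - transpose A"
  by (simp add: transpose_def vec_eq_iff)
lemma mm_radd: "((A::real^'m^'n) + B) ** (C::real^'p^'m) = A ** C + B ** C"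
  by (simp add: matrix_matrix_mult_def vec_eq_iff sum.distrib distrib_right)
lemma mm_rdiff: "((A::real^'m^'n) - B) ** (C::real^'p^'m) = A ** C - B ** C"
  by (simp add: matrix_matrix_mult_def vec_eq_iff sum_subtractf left_diff_distrib)
lemma mm_ldiff: "(A::real^'m^'n) ** ((B::real^'p^'m) - C) = A ** B - A ** C"
  by (simp add: matrix_matrix_mult_def vec_eq_iff sum_subtractf right_diff_distrib)
lemma mm_lneg: "(- (A::real^'m^'n)) ** (C::real^'p^'m) = - (A ** C)"
  by (simp add: matrix_matrix_mult_def vec_eq_iff sum_negf)
lemma mv_radd: "((A::real^'m^'n) + B) *v v = A *v v + B *v v"
  by (simp add: matrix_vector_mult_def vec_eq_iff sum.distrib distrib_right)

lemma tr_mm_col: "transpose ((X::real^'m^'n) ** B) $ j = X *v column j B"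
  by (simp add: transpose_def matrix_matrix_mult_def matrix_vector_mult_def column_def vec_eq_iff)

lemma norm_XB_sq:
  fixes X :: "real^'p^'n" and B :: "real^'q^'p"
  shows "(norm (X ** B))^2 \<le> (1 + norm (transpose X ** X - mat 1)) * (norm B)^2"
proof -
  let ?S = "transpose X ** X - mat 1"
  have v: "(norm (X *v v))^2 \<le> (1 + norm ?S) * (norm v)^2" for v :: "real^'p"
  proof -
    have "(norm (X *v v))^2 = inner v ((transpose X ** X) *v v)"
      by (simp add: power2_norm_eq_inner inner_mv_transpose matrix_vector_mul_assoc)
    also have "inner v ((transpose X ** X) *v v) = inner v v + inner v (?S *v v)"
      by (simp add: matrix_vector_mult_diff_rdistrib inner_diff_right)
    also have "inner v (?S *v v) \<le> norm v * (norm ?S * norm v)"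
      using norm_cauchy_schwarz[of v "?S *v v"] norm_mv_le[of ?S v]
      by (meson mult_left_mono norm_ge_zero order_trans)
    finally show ?thesis by (simp add: power2_norm_eq_inner[symmetric] algebra_simps power2_eq_square)
  qed
  have "(norm (X ** B))^2 = (\<Sum>j\<in>UNIV. (norm (X *v column j B))^2)"
    by (simp add: norm_transpose[symmetric, of "X ** B"] norm_sq_rows tr_mm_col)
  also have "\<dots> \<le> (\<Sum>j\<in>UNIV. (1 + norm ?S) * (norm (column j B))^2)"
    by (intro sum_mono v)
  also have "\<dots> = (1 + norm ?S) * (\<Sum>j\<in>UNIV. (norm (column j B))^2)"
    by (simp add: sum_distrib_left)
  also have "(\<Sum>j\<in>UNIV. (norm (column j B))^2) = (norm B)^2"
    unfolding norm_sq_mat norm_sq_vec by (simp add: column_def, rule sum.swap)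
  finally show ?thesis .
qed


lemma mm_sR: "(A::real^'m^'n) ** ((k::real) *\<^sub>R (B::real^'p^'m)) = k *\<^sub>R (A ** B)"
  by (simp add: matrix_matrix_mult_def vec_eq_iff sum_distrib_left mult_ac)
lemma mm_sL: "((k::real) *\<^sub>R (A::real^'m^'n)) ** (B::real^'p^'m) = k *\<^sub>R (A ** B)"
  by (simp add: matrix_matrix_mult_def vec_eq_iff sum_distrib_left mult_ac)
lemma vs3: "(a::'a::real_vector) - e *\<^sub>R b - e *\<^sub>R (c - e *\<^sub>R d) = a - e *\<^sub>R c - e *\<^sub>R b + (e * e) *\<^sub>R d"
  by (simp add: algebra_simps)

lemma expand:
  fixes X M :: "real^'p^'n"
  shows "transpose (X - \<eta> *\<^sub>R M) ** (X - \<eta> *\<^sub>R M)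
       = transpose X ** X - \<eta> *\<^sub>R (transpose X ** M) - \<eta> *\<^sub>R (transpose M ** X)
         + (\<eta> * \<eta>) *\<^sub>R (transpose M ** M)"
proof -
  have "transpose (X - \<eta> *\<^sub>R M) ** (X - \<eta> *\<^sub>R M)
     = transpose X ** X - \<eta> *\<^sub>R (transpose M ** X) - \<eta> *\<^sub>R (transpose X ** M - \<eta> *\<^sub>R (transpose M ** M))"
    by (simp only: tr_diff transpose_scalar mm_rdiff mm_ldiff mm_sR mm_sL)
  also have "\<dots> = transpose X ** X - \<eta> *\<^sub>R (transpose X ** M) - \<eta> *\<^sub>R (transpose M ** X)
         + (\<eta> * \<eta>) *\<^sub>R (transpose M ** M)"
    by (rule vs3)
  finally show ?thesis .
qed



lemma scalar_key:
  fixes \<epsilon> lam atil \<eta> d a :: real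
  assumes eps: "0 < \<epsilon>" "\<epsilon> < 1" and lam: "0 < lam" and atil: "0 < atil"
    and eta: "0 < \<eta>"
    and hQ: "\<And>a d. 0 < a \<Longrightarrow> a \<le> atil \<Longrightarrow> 0 < d \<Longrightarrow> d \<le> \<epsilon> \<Longrightarrow>
       \<eta> \<le> (lam * (1 - \<epsilon>) * d + a * sqrt ((\<epsilon> - d) / 2)) / (a^2 + lam^2 * (1 + \<epsilon>) * d^2)"
    and d: "0 \<le> d" "d \<le> \<epsilon>" and a: "0 \<le> a" "a \<le> atil"
  shows "d - 2 * \<eta> * lam * (1 - \<epsilon>) * d + 2 * \<eta>^2 * (a^2 + lam^2 * (1 + \<epsilon>) * d^2) \<le> \<epsilon>"
proof -
  define F where "F = (\<lambda>d. (lam * (1 - \<epsilon>) * d + atil * sqrt ((\<epsilon> - d) / 2)) / (atil^2 + lam^2 * (1 + \<epsilon>) * d^2))"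
  have "(F \<longlongrightarrow> F 0) (at 0)"
    unfolding F_def using atil by (intro tendsto_intros) auto
  then have lim: "(F \<longlongrightarrow> F 0) (at_right 0)"
    by (rule tendsto_mono[rotated]) (simp add: at_le)
  have ev: "eventually (\<lambda>d. \<eta> \<le> F d) (at_right 0)"
    unfolding eventually_at_right_field
    using eps by (intro exI[of _ \<epsilon>]) (auto simp: F_def intro!: hQ[OF atil order_refl])
  have "\<eta> \<le> F 0" by (rule tendsto_lowerbound[OF lim ev]) simp
  then have "\<eta> \<le> sqrt (\<epsilon> / 2) / atil" using atil by (simp add: F_def power2_eq_square)
  then have "\<eta> * atil \<le> sqrt (\<epsilon> / 2)" using atil by (simp add: field_simps)
  then have "(\<eta> * atil)^2 \<le> (sqrt (\<epsilon> / 2))^2" using eta atil by (intro power_mono) auto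
  then have G0: "2 * \<eta>^2 * atil^2 \<le> \<epsilon>" using eps by (simp add: power_mult_distrib)
  have "\<eta> \<le> (lam * (1 - \<epsilon>) * \<epsilon>) / (atil^2 + lam^2 * (1 + \<epsilon>) * \<epsilon>^2)"
    using hQ[OF atil order_refl eps(1) order_refl] by simp
  then have G1: "\<eta> * (atil^2 + lam^2 * (1 + \<epsilon>) * \<epsilon>^2) \<le> lam * (1 - \<epsilon>) * \<epsilon>"
    using eps atil by (simp add: field_simps add_pos_nonneg)
  define G where "G = (\<lambda>d. d - 2 * \<eta> * lam * (1 - \<epsilon>) * d + 2 * \<eta>^2 * (atil^2 + lam^2 * (1 + \<epsilon>) * d^2) - \<epsilon>)"
  have g0: "G 0 \<le> 0" using G0 by (simp add: G_def)
  have g1: "G \<epsilon> \<le> 0"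
  proof -
    have "2 * \<eta> * (\<eta> * (atil^2 + lam^2 * (1 + \<epsilon>) * \<epsilon>^2)) \<le> 2 * \<eta> * (lam * (1 - \<epsilon>) * \<epsilon>)"
      using G1 eta by simp
    then show ?thesis by (simp add: G_def algebra_simps power2_eq_square)
  qed
  have id: "\<epsilon> * G d = (\<epsilon> - d) * G 0 + d * G \<epsilon> + 2 * \<eta>^2 * lam^2 * (1 + \<epsilon>) * \<epsilon> * (d * (d - \<epsilon>))"
    by (simp add: G_def algebra_simps power2_eq_square)
  have "(\<epsilon> - d) * G 0 \<le> 0" using g0 d by (simp add: mult_nonneg_nonpos)
  moreover have "d * G \<epsilon> \<le> 0" using g1 d by (simp add: mult_nonneg_nonpos)
  moreover have "2 * \<eta>^2 * lam^2 * (1 + \<epsilon>) * \<epsilon> * (d * (d - \<epsilon>)) \<le> 0"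
    using d eps by (intro mult_nonneg_nonpos) (auto intro: mult_nonneg_nonpos)
  ultimately have "\<epsilon> * G d \<le> 0" unfolding id by linarith
  then have Gd: "G d \<le> 0" using eps by (simp add: mult_le_0_iff)
  have "a^2 \<le> atil^2" using a by (intro power_mono) auto
  then have "2 * \<eta>^2 * (a^2 + lam^2 * (1 + \<epsilon>) * d^2) \<le> 2 * \<eta>^2 * (atil^2 + lam^2 * (1 + \<epsilon>) * d^2)"
    by (intro mult_left_mono) auto
  then show ?thesis using Gd by (simp add: G_def)
qed



lemma hQ_from:
  fixes \<epsilon> lam atil \<eta> :: real
  assumes eps: "0 < \<epsilon>" "\<epsilon> < 1" and lam: "0 < lam" and le: "\<eta> \<le> eta_star atil \<epsilon> lam"
    and a: "0 < a" "a \<le> atil" and d: "0 < d" "d \<le> \<epsilon>"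
  shows "\<eta> \<le> (lam * (1 - \<epsilon>) * d + a * sqrt ((\<epsilon> - d) / 2)) / (a^2 + lam^2 * (1 + \<epsilon>) * d^2)"
proof -
  let ?f = "(\<lambda>(a, d). (lam * (1 - \<epsilon>) * d + a * sqrt ((\<epsilon> - d) / 2))
        / (a^2 + lam^2 * (1 + \<epsilon>) * d^2))"
  have "bdd_below (?f ` ({0<..atil} \<times> {0<..\<epsilon>}))"
  proof (rule bdd_belowI[of _ 0], clarsimp)
    fix a d :: real assume "0 < a" "0 < d" "d \<le> \<epsilon>"
    then show "0 \<le> (lam * (1 - \<epsilon>) * d + a * sqrt ((\<epsilon> - d) / 2)) / (a^2 + lam^2 * (1 + \<epsilon>) * d^2)"
      using eps lam by (intro divide_nonneg_nonneg add_nonneg_nonneg mult_nonneg_nonneg) auto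
  qed
  then have "Q_fun lam \<epsilon> atil \<le> ?f (a, d)"
    unfolding Q_fun_def by (rule cINF_lower) (use a d in auto)
  then show ?thesis using le unfolding eta_star_def by simp
qed

lemma sq_sum_le: "((x::real) + y)^2 \<le> 2 * (x^2 + y^2)"
proof -
  have "(x + y)^2 + (x - y)^2 = 2 * (x^2 + y^2)" by (simp add: power2_eq_square algebra_simps)
  then show ?thesis using zero_le_power2[of "x - y"] by linarith
qed

lemma vs_id:
  fixes I S B W N :: "'a::real_vector"
  shows "(I + S) - \<eta> *\<^sub>R (B + lam *\<^sub>R W) - \<eta> *\<^sub>R (- B + lam *\<^sub>R W) + (\<eta> * \<eta>) *\<^sub>R N - I
    = (S - (2 * \<eta> * lam) *\<^sub>R W) + (\<eta>^2) *\<^sub>R N"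
  by (simp add: algebra_simps power2_eq_square scaleR_2 flip: scaleR_add_left)

lemma step:
  fixes X :: "real^'p^'n" and A :: "real^'n^'n"
  assumes eps: "0 < \<epsilon>" "\<epsilon> < 1" and lam: "0 < lam" and atil: "0 < atil"
    and skew: "transpose A = - A"
    and AX: "norm (A ** X) \<le> atil"
    and XS: "norm (transpose X ** X - mat 1) \<le> \<epsilon>"
    and eta: "0 < \<eta>" and le: "\<eta> \<le> eta_star atil \<epsilon> lam"
  shows "norm (transpose (X - \<eta> *\<^sub>R (A ** X + lam *\<^sub>R (X ** (transpose X ** X - mat 1))))
     ** (X - \<eta> *\<^sub>R (A ** X + lam *\<^sub>R (X ** (transpose X ** X - mat 1)))) - mat 1) \<le> \<epsilon>"
proof -
  define S where "S = transpose X ** X - mat 1"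
  define M where "M = A ** X + lam *\<^sub>R (X ** S)"
  define d where "d = norm S"
  have T: "transpose X ** X = mat 1 + S" by (simp add: S_def)
  have Ssym: "transpose S = S" by (simp add: S_def tr_diff matrix_transpose_mul)
  have XXS: "transpose X ** (X ** S) = S + S ** S"
    by (simp add: matrix_mul_assoc T mm_radd)
  have P1: "transpose X ** M = transpose X ** (A ** X) + lam *\<^sub>R (S + S ** S)"
    by (simp add: M_def matrix_add_ldistrib XXS matrix_scalar_ac scalar_matrix_assoc[symmetric])
  have mm_rneg: "(B::real^'n^'p) ** (- A) = - (B ** A)" for B
    by (simp add: matrix_matrix_mult_def vec_eq_iff sum_negf)
  have SXX: "S ** (transpose X ** X) = S + S ** S"
    by (simp add: T matrix_add_ldistrib)
  have trM: "transpose M = transpose X ** (- A) + lam *\<^sub>R (S ** transpose X)"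
    by (simp add: M_def tr_add transpose_scalar matrix_transpose_mul skew Ssym)
  have P2: "transpose M ** X = - (transpose X ** (A ** X)) + lam *\<^sub>R (S + S ** S)"
    unfolding trM mm_radd mm_rneg mm_lneg scalar_matrix_assoc[symmetric]
    by (simp add: matrix_mul_assoc[symmetric] SXX)
  have key: "transpose (X - \<eta> *\<^sub>R M) ** (X - \<eta> *\<^sub>R M) - mat 1
      = (S - (2 * \<eta> * lam) *\<^sub>R (S + S ** S)) + (\<eta>^2) *\<^sub>R (transpose M ** M)"
  proof -
    have "transpose (X - \<eta> *\<^sub>R M) ** (X - \<eta> *\<^sub>R M)
       = transpose X ** X - \<eta> *\<^sub>R (transpose X ** M) - \<eta> *\<^sub>R (transpose M ** X)
         + (\<eta> * \<eta>) *\<^sub>R (transpose M ** M)"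
      by (rule expand)
    note E0 = this
    have E: "transpose (X - \<eta> *\<^sub>R M) ** (X - \<eta> *\<^sub>R M) = (mat 1 + S) - \<eta> *\<^sub>R (transpose X ** (A ** X) + lam *\<^sub>R (S + S ** S))
       - \<eta> *\<^sub>R (- (transpose X ** (A ** X)) + lam *\<^sub>R (S + S ** S)) + (\<eta> * \<eta>) *\<^sub>R (transpose M ** M)"
      by (simp only: E0 P1 P2 T)
    show ?thesis unfolding E by (rule vs_id)
  qed
  have eta2: "\<eta> \<le> 1 / (2 * lam)" using le by (simp add: eta_star_def)
  define c where "c = 2 * \<eta> * lam"
  have c01: "0 \<le> c" "c \<le> 1" using eta lam eta2 by (auto simp: c_def field_simps)
  have d0: "0 \<le> d" "d \<le> \<epsilon>" using XS by (auto simp: d_def S_def)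
  have "S - c *\<^sub>R (S + S ** S) = (1 - c) *\<^sub>R S - c *\<^sub>R (S ** S)"
    by (simp add: algebra_simps)
  then have "norm (S - c *\<^sub>R (S + S ** S)) \<le> norm ((1 - c) *\<^sub>R S) + norm (c *\<^sub>R (S ** S))"
    by (metis norm_triangle_ineq4)
  also have "\<dots> \<le> (1 - c) * d + c * (d * d)"
    using c01 norm_mm_le[of S S] by (auto simp: d_def intro: mult_left_mono)
  also have "\<dots> \<le> (1 - c) * d + c * (\<epsilon> * d)"
    using c01 d0 by (intro add_left_mono mult_left_mono mult_right_mono) auto
  finally have N1: "norm (S - c *\<^sub>R (S + S ** S)) \<le> d - c * (1 - \<epsilon>) * d" by (simp add: algebra_simps)
  have XSb: "(norm (X ** S))^2 \<le> (1 + \<epsilon>) * d^2"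
    using norm_XB_sq[of X S] d0 unfolding S_def[symmetric] d_def[symmetric]
    by (meson add_left_mono mult_right_mono order_trans zero_le_power2)
  have "norm M \<le> norm (A ** X) + lam * norm (X ** S)"
    unfolding M_def using lam by (metis abs_of_pos norm_scaleR norm_triangle_ineq)
  then have "(norm M)^2 \<le> (norm (A ** X) + lam * norm (X ** S))^2"
    by (intro power_mono) auto
  also have "\<dots> \<le> 2 * ((norm (A ** X))^2 + (lam * norm (X ** S))^2)"
    by (rule sq_sum_le)
  also have "\<dots> \<le> 2 * (atil^2 + lam^2 * ((1 + \<epsilon>) * d^2))"
    using AX XSb lam by (intro mult_left_mono add_mono power_mono) (auto simp: power_mult_distrib)
  finally have NM: "(norm M)^2 \<le> 2 * (atil^2 + lam^2 * (1 + \<epsilon>) * d^2)" by (simp add: algebra_simps)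
  have "norm ((\<eta>^2) *\<^sub>R (transpose M ** M)) \<le> \<eta>^2 * (norm M)^2"
    using norm_mm_le[of "transpose M" M] by (simp add: norm_transpose power2_eq_square mult_left_mono)
  also have "\<dots> \<le> \<eta>^2 * (2 * (atil^2 + lam^2 * (1 + \<epsilon>) * d^2))"
    using NM by (intro mult_left_mono) auto
  finally have N2: "norm ((\<eta>^2) *\<^sub>R (transpose M ** M)) \<le> \<eta>^2 * (2 * (atil^2 + lam^2 * (1 + \<epsilon>) * d^2))" .
  have fin: "d - 2 * \<eta> * lam * (1 - \<epsilon>) * d + 2 * \<eta>^2 * (atil^2 + lam^2 * (1 + \<epsilon>) * d^2) \<le> \<epsilon>"
    by (rule scalar_key[OF eps lam atil eta hQ_from[OF eps lam le] d0 _ order_refl]) (use atil in auto)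
  have N1': "norm (S - (2 * \<eta> * lam) *\<^sub>R (S + S ** S)) \<le> d - 2 * \<eta> * lam * (1 - \<epsilon>) * d"
    using N1 unfolding c_def .
  have N2': "norm ((\<eta>^2) *\<^sub>R (transpose M ** M)) \<le> 2 * \<eta>^2 * (atil^2 + lam^2 * (1 + \<epsilon>) * d^2)"
    using N2 by (simp only: mult.assoc mult.left_commute)
  have "norm (transpose (X - \<eta> *\<^sub>R M) ** (X - \<eta> *\<^sub>R M) - mat 1) \<le> \<epsilon>"
    unfolding key
    using norm_triangle_ineq[of "S - (2 * \<eta> * lam) *\<^sub>R (S + S ** S)" "(\<eta>^2) *\<^sub>R (transpose M ** M)"] N1' N2' fin
    by linarith
  then show ?thesis unfolding S_def[symmetric] M_def[symmetric] .
qed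


lemma St_mem: "X \<in> St_eps \<epsilon> \<longleftrightarrow> norm (transpose X ** X - mat 1) \<le> \<epsilon>"
  by (simp add: St_eps_def fro_norm_eq)

theorem proposition5:
  fixes Acal :: "nat \<Rightarrow> (real^'p^'n) list \<Rightarrow> real^'n^'n"
    and X :: "nat \<Rightarrow> real^'p^'n"
    and \<eta> :: "nat \<Rightarrow> real"
    and \<epsilon> lam atil :: real
  assumes np: "CARD('p) \<le> CARD('n)"
    and eps: "0 < \<epsilon>" "\<epsilon> < 1"
    and lam: "0 < lam"
    and atil: "0 < atil"
    and skew: "\<And>k xs. length xs = Suc k \<Longrightarrow> transpose (Acal k xs) = - Acal k xs"
    and bound: "\<And>k xs. length xs = Suc k \<Longrightarrow> (\<forall>Y\<in>set xs. Y \<in> St_eps \<epsilon>) \<Longrightarrow>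
                   fro_norm (Acal k xs ** last xs) \<le> atil"
    and X0: "X 0 \<in> St_eps \<epsilon>"
    and rec: "\<And>k. X (Suc k) = X k - \<eta> k *\<^sub>R
                 (Acal k (map X [0..<Suc k]) ** X k + lam *\<^sub>R (X k ** (transpose (X k) ** X k - mat 1)))"
    and eta_pos: "\<And>k. 0 < \<eta> k"
    and eta_le: "\<And>k. \<eta> k \<le> eta_star atil \<epsilon> lam"
  shows "\<forall>k. X k \<in> St_eps \<epsilon>"
proof -
  have "\<forall>j\<le>k. X j \<in> St_eps \<epsilon>" for k
  proof (induction k)
    case 0
    then show ?case using X0 by simp
  next
    case (Suc k)
    let ?xs = "map X [0..<Suc k]"
    have len: "length ?xs = Suc k" by simp
    have allin: "\<forall>Y\<in>set ?xs. Y \<in> St_eps \<epsilon>" using Suc.IH by auto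
    have lst: "last ?xs = X k" by simp
    have AX: "norm (Acal k ?xs ** X k) \<le> atil"
      using bound[OF len allin] unfolding lst fro_norm_eq .
    have Xk: "norm (transpose (X k) ** X k - mat 1) \<le> \<epsilon>"
      using Suc.IH St_mem by auto
    have "X (Suc k) \<in> St_eps \<epsilon>"
      unfolding St_mem rec
      by (rule step[OF eps lam atil skew[OF len] AX Xk eta_pos eta_le])
    then show ?case using Suc.IH le_Suc_eq by auto
  qed
  then show ?thesis by auto
qed

end
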